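(* Let $\pi\in\mathfrak{S}_n$ avoid $231$. If $(a,b)$ and $(c,d)$ are $2$-cycles in the disjoint cycle decomposition of $\pi$ with $a<b$, $c<d$ and $a<c$, then either $b<c$ or $b>d$.
   Context: A permutation avoids $231$ if there are no indices $i<j<k$ with $\pi_k<\pi_i<\pi_j$. *)

theory Defs
  imports "HOL-Combinatorics.Permutations"
begin

definition avoids_231 :: "nat \<Rightarrow> (nat \<Rightarrow> nat) \<Rightarrow> bool" where
  "avoids_231 n p \<longleftrightarrow>
     \<not> (\<exists>i j k. i \<in> {1..n} \<and> j \<in> {1..n} \<and> k \<in> {1..n} \<and> i < j \<and> j < k \<and>
                 p k < p i \<and> p i < p j)"

end

theory Submission
  imports Defs
begin

theorem lemma3p2:
  fixes n :: nat and p :: "nat \<Rightarrow> nat" and a b c d :: nat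
  assumes "p permutes {1..n}"
    and "avoids_231 n p"
    and "p a = b" and "p b = a" and "a < b"
    and "p c = d" and "p d = c" and "c < d"
    and "a < c"
  shows "b < c \<or> b > d"
proof (rule ccontr)
  assume h: "\<not> (b < c \<or> b > d)"
  have fix_out: "\<And>x. x \<notin> {1..n} \<Longrightarrow> p x = x" using assms(1) unfolding permutes_def by blast
  have ina: "a \<in> {1..n}" using fix_out assms(3,5) by fastforce
  have inb: "b \<in> {1..n}" using fix_out assms(4,5) by fastforce
  have inc: "c \<in> {1..n}" using fix_out assms(6,8) by fastforce
  have "b \<noteq> c" using assms by auto
  moreover have "b \<noteq> d" using assms by auto
  ultimately have "c < b" "b < d" using h by auto
  then show False using assms(2,3,4,5,6,9) ina inb inc unfolding avoids_231_def by fastforce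
qed

end
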